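(* Let $G=(V,E)$ be a graph with $n = |V| \ge \alpha$ nodes, let $\alpha,\beta>1$, $L=\lceil\log_\beta(n/\alpha)\rceil$, and let $\ell:V\to\{0,\dots,L\}$ be a level assignment with edge weights $w(u,v) = \beta^{-\max(\ell(u),\ell(v))}$ for $(u,v)\in E$ and node weights $W_v = \sum_{u \in \mathcal N_v} w(u,v)$ (where $\mathcal N_v$ is the neighbor set of $v$). Suppose that for every $v\in V$: if $\ell(v)=0$ then $W_v\le\alpha\beta$, and if $\ell(v)\ge 1$ then $1\le W_v\le \alpha\beta$. Then $V^* = \{v\in V: W_v\ge 1\}$ is a vertex cover of $G$, and $|V^*|$ is at most $2\alpha\beta$ times the size of a minimum vertex cover of $G$.
   Context: A vertex cover of $G$ is a set of nodes containing at least one endpoint of every edge. *)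

theory Defs
  imports Complex_Main
begin

definition simple_graph :: "'a set \<Rightarrow> 'a set set \<Rightarrow> bool" where
  "simple_graph V E \<longleftrightarrow> finite V \<and> (\<forall>e\<in>E. e \<subseteq> V \<and> card e = 2)"

definition neighbors :: "'a set set \<Rightarrow> 'a \<Rightarrow> 'a set" where
  "neighbors E v = {u. {u, v} \<in> E}"

definition vertex_cover :: "'a set \<Rightarrow> 'a set set \<Rightarrow> 'a set \<Rightarrow> bool" where
  "vertex_cover V E C \<longleftrightarrow> C \<subseteq> V \<and> (\<forall>e\<in>E. e \<inter> C \<noteq> {})"

definition min_vertex_cover_size :: "'a set \<Rightarrow> 'a set set \<Rightarrow> nat" where
  "min_vertex_cover_size V E = Min (card ` {C. vertex_cover V E C})"

definition edge_weight :: "real \<Rightarrow> ('a \<Rightarrow> nat) \<Rightarrow> 'a \<Rightarrow> 'a \<Rightarrow> real" where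
  "edge_weight \<beta> lvl u v = \<beta> powr (- real (max (lvl u) (lvl v)))"

definition node_weight :: "'a set set \<Rightarrow> real \<Rightarrow> ('a \<Rightarrow> nat) \<Rightarrow> 'a \<Rightarrow> real" where
  "node_weight E \<beta> lvl v = (\<Sum>u\<in>neighbors E v. edge_weight \<beta> lvl u v)"

end

theory Submission
  imports Defs
begin

theorem theorem2p5:
  fixes V :: "'a set" and E :: "'a set set" and \<alpha> \<beta> :: real and lvl :: "'a \<Rightarrow> nat"
  assumes G: "simple_graph V E"
    and n_ge: "real (card V) \<ge> \<alpha>"
    and alpha: "\<alpha> > 1" and beta: "\<beta> > 1"
    and levels: "\<forall>v\<in>V. lvl v \<in> {0..nat \<lceil>log \<beta> (real (card V) / \<alpha>)\<rceil>}"
    and lvl0: "\<forall>v\<in>V. lvl v = 0 \<longrightarrow> node_weight E \<beta> lvl v \<le> \<alpha> * \<beta>"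
    and lvl_pos: "\<forall>v\<in>V. lvl v \<ge> 1 \<longrightarrow> 1 \<le> node_weight E \<beta> lvl v \<and> node_weight E \<beta> lvl v \<le> \<alpha> * \<beta>"
  shows "vertex_cover V E {v\<in>V. node_weight E \<beta> lvl v \<ge> 1}
    \<and> real (card {v\<in>V. node_weight E \<beta> lvl v \<ge> 1}) \<le> 2 * \<alpha> * \<beta> * real (min_vertex_cover_size V E)"
proof -
  define w where "w = (\<lambda>u v. edge_weight \<beta> lvl u v)"
  define W where "W = (\<lambda>v. node_weight E \<beta> lvl v)"
  define f where "f = (\<lambda>u v. if {u,v} \<in> E then w u v else 0)"
  have finV: "finite V" and Esub: "\<And>e. e \<in> E \<Longrightarrow> e \<subseteq> V \<and> card e = 2"
    using G unfolding simple_graph_def by auto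
  have wnn: "w u v \<ge> 0" for u v unfolding w_def edge_weight_def by simp
  have wsym: "w u v = w v u" for u v unfolding w_def edge_weight_def by (simp add: max.commute)
  have fnn: "f u v \<ge> 0" for u v unfolding f_def using wnn by simp
  have fsym: "f u v = f v u" for u v unfolding f_def using wsym by (simp add: insert_commute)
  have Nsub: "neighbors E v \<subseteq> V" if "v \<in> V" for v
    unfolding neighbors_def using Esub by blast
  have Wf: "W v = (\<Sum>u\<in>V. f u v)" if "v \<in> V" for v
  proof -
    have "(\<Sum>u\<in>V. f u v) = (\<Sum>u\<in>neighbors E v. f u v)"
      by (rule sum.mono_neutral_right[OF finV Nsub[OF that]])
         (auto simp: f_def neighbors_def)
    also have "\<dots> = W v" unfolding W_def node_weight_def f_def w_def
      by (rule sum.cong) (auto simp: neighbors_def)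
    finally show ?thesis by simp
  qed
  have Wnn: "W v \<ge> 0" for v unfolding W_def node_weight_def using wnn w_def
    by (simp add: sum_nonneg)
  have Wle: "W v \<le> \<alpha> * \<beta>" if "v \<in> V" for v
    using lvl0 lvl_pos that unfolding W_def by (cases "lvl v = 0") auto
  have cov: "vertex_cover V E {v\<in>V. W v \<ge> 1}"
    unfolding vertex_cover_def
  proof safe
    fix e assume e: "e \<in> E" and dis: "e \<inter> {v \<in> V. 1 \<le> W v} = {}"
    from Esub[OF e] obtain u v where uv: "e = {u,v}" "u \<noteq> v"
      by (metis card_2_iff)
    have uV: "u \<in> V" and vV: "v \<in> V" using Esub[OF e] uv by auto
    have "W u < 1" "W v < 1" using dis uv uV vV by auto
    hence "lvl u = 0" "lvl v = 0" using lvl_pos uV vV unfolding W_def by force+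
    hence "w v u = 1" unfolding w_def edge_weight_def using beta by simp
    have "v \<in> neighbors E u" using e uv by (simp add: neighbors_def insert_commute)
    have finN: "finite (neighbors E u)" using Nsub[OF uV] finV finite_subset by blast
    have "w v u \<le> W u" unfolding W_def node_weight_def w_def
      by (rule member_le_sum) (use \<open>v \<in> neighbors E u\<close> finN in \<open>auto simp: edge_weight_def\<close>)
    with \<open>w v u = 1\<close> \<open>W u < 1\<close> show False by simp
  qed
  let ?S = "card ` {C. vertex_cover V E C}"
  have finS: "finite ?S"
  proof -
    have "{C. vertex_cover V E C} \<subseteq> Pow V" unfolding vertex_cover_def by auto
    thus ?thesis using finV by (meson finite_Pow_iff finite_imageI finite_subset)
  qed
  have "vertex_cover V E V" unfolding vertex_cover_def
  proof safe
    fix e assume e: "e \<in> E" "e \<inter> V = {}"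
    then show False using Esub[OF e(1)] by (metis card.empty inf.absorb1 zero_neq_numeral)
  qed
  hence neS: "?S \<noteq> {}" by auto
  obtain C where C: "vertex_cover V E C" "card C = min_vertex_cover_size V E"
    using Min_in[OF finS neS] unfolding min_vertex_cover_size_def by auto
  have CV: "C \<subseteq> V" using C unfolding vertex_cover_def by auto
  have Cedge: "f u v = 0 \<or> u \<in> C \<or> v \<in> C" for u v
    using C(1) unfolding vertex_cover_def f_def by auto
  have ind: "f u v \<le> (if u \<in> C then f u v else 0) + (if v \<in> C then f u v else 0)" for u v
    using Cedge[of u v] fnn[of u v] by auto
  have "(\<Sum>v\<in>V. W v) = (\<Sum>v\<in>V. \<Sum>u\<in>V. f u v)" using Wf by simp
  also have "\<dots> \<le> (\<Sum>v\<in>V. \<Sum>u\<in>V. (if u \<in> C then f u v else 0) + (if v \<in> C then f u v else 0))"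
    by (intro sum_mono ind)
  also have "\<dots> = (\<Sum>v\<in>V. \<Sum>u\<in>V. (if u \<in> C then f u v else 0)) + (\<Sum>v\<in>V. \<Sum>u\<in>V. (if v \<in> C then f u v else 0))"
    by (simp add: sum.distrib)
  also have "(\<Sum>v\<in>V. \<Sum>u\<in>V. (if u \<in> C then f u v else 0)) = (\<Sum>u\<in>V. \<Sum>v\<in>V. (if u \<in> C then f u v else 0))"
    by (rule sum.swap)
  also have "\<dots> = (\<Sum>u\<in>V. if u \<in> C then W u else 0)"
    by (rule sum.cong) (auto simp: Wf fsym)
  also have "(\<Sum>v\<in>V. \<Sum>u\<in>V. (if v \<in> C then f u v else 0)) = (\<Sum>v\<in>V. if v \<in> C then W v else 0)"
    by (rule sum.cong) (auto simp: Wf)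
  also have "(\<Sum>v\<in>V. if v \<in> C then W v else 0) = (\<Sum>v\<in>C. W v)"
    using CV finV by (simp add: sum.If_cases Int_absorb1)
  also have "(\<Sum>v\<in>C. W v) \<le> (\<Sum>v\<in>C. \<alpha> * \<beta>)"
    using CV Wle by (intro sum_mono) auto
  finally have tot: "(\<Sum>v\<in>V. W v) \<le> 2 * \<alpha> * \<beta> * real (card C)" by simp
  let ?V = "{v\<in>V. W v \<ge> 1}"
  have "real (card ?V) = (\<Sum>v\<in>?V. 1)" by simp
  also have "\<dots> \<le> (\<Sum>v\<in>?V. W v)" by (rule sum_mono) auto
  also have "\<dots> \<le> (\<Sum>v\<in>V. W v)" using finV Wnn by (intro sum_mono2) auto
  finally have "real (card ?V) \<le> 2 * \<alpha> * \<beta> * real (min_vertex_cover_size V E)"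
    using tot C(2) by simp
  with cov show ?thesis unfolding W_def by simp
qed

end
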